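(* Let $G$ be a Polish group and let $B\subseteq G$ be universally measurable. The following are equivalent: (1) there exists a Borel probability measure $\mu$ on $G$ such that $\mu(gBh)=0$ for every $g,h\in G$; (2) there exists a Borel probability measure $\mu$ on $G$ such that $\mu$ has compact support and $\mu(gBh)=0$ for every $g,h\in G$; (3) there exists a Borel measure $\mu$ on $G$ such that $0<\mu(X)<\infty$ for some $\mu$-measurable set $X\subseteq G$ and $\mu(gBh)=0$ for every $g,h\in G$; (4) there exists a Borel measure $\mu$ on $G$ such that $0<\mu(C)<\infty$ for some compact set $C\subseteq G$ and $\mu(gBh)=0$ for every $g,h\in G$.
   Context: A Polish group is a topological group whose topology is separable and completely metrizable. A subset of a Polish space $X$ is universally measurable if it is $\nu$-measurable for every $\sigma$-finite Borel measure $\nu$ on $X$. Measures are outer measures (identified with the complete measure on their measurable sets); for an outer measure $\mu$ on $X$, $A$ is $\mu$-measurable if $\mu(E)=\mu(E\cap A)+\mu(E\setminus A)$ for all $E\subseteq X$; a measure is Borel if every Borel set is measurable for it. *)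

theory Defs
  imports "HOL-Analysis.Analysis"
begin

text \<open>A Polish group is modelled as a type of class
  polish_space (separable, complete metric -- any completely metrizable
  separable topology admits such a metric) and topological_group_add
  (a group, written additively but not necessarily commutative, with
  continuous operation and inversion).\<close>

definition is_outer_measure :: "('a set \<Rightarrow> ennreal) \<Rightarrow> bool" where
  "is_outer_measure \<mu> \<longleftrightarrow>
     \<mu> {} = 0 \<and>
     (\<forall>A B. A \<subseteq> B \<longrightarrow> \<mu> A \<le> \<mu> B) \<and>
     (\<forall>A :: nat \<Rightarrow> 'a set. \<mu> (\<Union>i. A i) \<le> (\<Sum>i. \<mu> (A i)))"

definition om_measurable :: "('a set \<Rightarrow> ennreal) \<Rightarrow> 'a set \<Rightarrow> bool" where
  "om_measurable \<mu> A \<longleftrightarrow> (\<forall>E. \<mu> E = \<mu> (E \<inter> A) + \<mu> (E - A))"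

definition borel_om :: "('a::topological_space set \<Rightarrow> ennreal) \<Rightarrow> bool" where
  "borel_om \<mu> \<longleftrightarrow> is_outer_measure \<mu> \<and> (\<forall>A \<in> sets borel. om_measurable \<mu> A)"

definition sigma_finite_om :: "('a set \<Rightarrow> ennreal) \<Rightarrow> bool" where
  "sigma_finite_om \<mu> \<longleftrightarrow>
     (\<exists>A :: nat \<Rightarrow> 'a set. (\<forall>i. om_measurable \<mu> (A i) \<and> \<mu> (A i) < \<infinity>) \<and> (\<Union>i. A i) = UNIV)"

definition borel_probability_om :: "('a::topological_space set \<Rightarrow> ennreal) \<Rightarrow> bool" where
  "borel_probability_om \<mu> \<longleftrightarrow> borel_om \<mu> \<and> \<mu> UNIV = 1"

definition universally_measurable :: "'a::topological_space set \<Rightarrow> bool" where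
  "universally_measurable B \<longleftrightarrow>
     (\<forall>\<nu>. borel_om \<nu> \<and> sigma_finite_om \<nu> \<longrightarrow> om_measurable \<nu> B)"

definition om_support :: "('a::topological_space set \<Rightarrow> ennreal) \<Rightarrow> 'a set" where
  "om_support \<mu> = {x. \<forall>U. open U \<and> x \<in> U \<longrightarrow> \<mu> U > 0}"

definition two_sided_translate :: "'a::group_add \<Rightarrow> 'a set \<Rightarrow> 'a \<Rightarrow> 'a set" where
  "two_sided_translate g B h = (\<lambda>b. g + b + h) ` B"

end

theory Submission
  imports Defs "HOL-Analysis.Regularity"
begin

lemma borel_om_measure_space:
  fixes \<mu> :: "'a::topological_space set \<Rightarrow> ennreal"
  assumes "borel_om \<mu>"
  shows "measure_space UNIV (sets borel) \<mu>"
proof -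
  have om: "is_outer_measure \<mu>" and bm: "\<And>A. A \<in> sets borel \<Longrightarrow> om_measurable \<mu> A"
    using assms by (auto simp: borel_om_def)
  interpret S: sigma_algebra "UNIV::'a set" "Pow UNIV" by (rule sigma_algebra_Pow)
  have oms: "outer_measure_space (Pow UNIV) \<mu>"
    unfolding outer_measure_space_def positive_def increasing_def countably_subadditive_def
  proof (intro conjI ballI allI impI)
    show "\<mu> {} = 0" using om unfolding is_outer_measure_def by blast
  next
    fix x y :: "'a set" assume "x \<subseteq> y"
    then show "\<mu> x \<le> \<mu> y" using om unfolding is_outer_measure_def by blast
  next
    fix A :: "nat \<Rightarrow> 'a set"
    have "\<mu> (\<Union>i. A i) \<le> (\<Sum>i. \<mu> (A i))" using om unfolding is_outer_measure_def by blast
    then show "\<mu> (\<Union> (range A)) \<le> (\<Sum>i. \<mu> (A i))" by simp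
  qed
  have ms: "measure_space UNIV (lambda_system UNIV (Pow UNIV) \<mu>) \<mu>"
    by (rule S.caratheodory_lemma[OF oms])
  have sub: "sets borel \<subseteq> lambda_system UNIV (Pow UNIV) \<mu>"
  proof
    fix A :: "'a set" assume "A \<in> sets borel"
    then have "om_measurable \<mu> A" by (rule bm)
    then have h: "\<And>x. \<mu> (A \<inter> x) + \<mu> ((UNIV - A) \<inter> x) = \<mu> x"
      proof -
      fix x
      have e1: "A \<inter> x = x \<inter> A" "(UNIV - A) \<inter> x = x - A" by auto
      have "\<mu> x = \<mu> (x \<inter> A) + \<mu> (x - A)"
        using \<open>om_measurable \<mu> A\<close> unfolding om_measurable_def by blast
      then show "\<mu> (A \<inter> x) + \<mu> ((UNIV - A) \<inter> x) = \<mu> x"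
        unfolding e1 by (rule sym)
    qed
    then show "A \<in> lambda_system UNIV (Pow UNIV) \<mu>"
      by (simp add: lambda_system_def)
  qed
  have sa: "sigma_algebra UNIV (sets borel :: 'a set set)"
    using sets.sigma_algebra_axioms[of "borel :: 'a measure"] by simp
  show ?thesis by (rule measure_down[OF ms sa sub])
qed
lemma exists_compact_pos:
  fixes \<mu> :: "'a::polish_space set \<Rightarrow> ennreal"
  assumes "borel_probability_om \<mu>"
  shows "\<exists>K. compact K \<and> 0 < \<mu> K"
proof (rule ccontr)
  assume neg: "\<not> ?thesis"
  have b: "borel_om \<mu>" and one: "\<mu> UNIV = 1" using assms by (auto simp: borel_probability_om_def)
  have ms: "measure_space UNIV (sets borel) \<mu>" by (rule borel_om_measure_space[OF b])
  define M where "M = measure_of UNIV (sets borel) \<mu>"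
  have sa: "sigma_algebra UNIV (sets borel :: 'a set set)"
    using sets.sigma_algebra_axioms[of "borel :: 'a measure"] by simp
  have sM: "sets M = sets borel" unfolding M_def
    using sa by (simp add: sigma_algebra.sigma_sets_eq)
  have spM: "space M = UNIV" unfolding M_def by simp
  have eM: "\<And>A. A \<in> sets borel \<Longrightarrow> emeasure M A = \<mu> A"
    unfolding M_def using ms
    by (intro emeasure_measure_of_sigma[OF sa]) (auto simp: measure_space_def)
  have "emeasure M (space M) \<noteq> \<infinity>" using eM[of UNIV] one spM by simp
  from inner_regular[OF sM this, of UNIV]
  have "emeasure M UNIV = (SUP K \<in> {K. K \<subseteq> UNIV \<and> compact K}. emeasure M K)" by simp
  also have "\<dots> = 0"
  proof -
    have "\<And>K. compact K \<Longrightarrow> emeasure M K = 0"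
      using neg eM by (metis borel_compact not_gr_zero)
    then show ?thesis by (intro SUP_eq_const) (auto intro: compact_empty)
  qed
  finally show False using eM[of UNIV] one by simp
qed


lemma restrict_prob:
  fixes \<mu> :: "'a::topological_space set \<Rightarrow> ennreal"
  assumes b: "borel_om \<mu>" and X: "om_measurable \<mu> X" and p: "0 < \<mu> X" and f: "\<mu> X < \<infinity>"
  defines "\<nu> \<equiv> (\<lambda>A. \<mu> (A \<inter> X) * inverse (\<mu> X))"
  shows "borel_probability_om \<nu>" and "\<And>A. \<mu> A = 0 \<Longrightarrow> \<nu> A = 0"
proof -
  let ?c = "inverse (\<mu> X)"
  have om: "is_outer_measure \<mu>" and bm: "\<And>A. A \<in> sets borel \<Longrightarrow> om_measurable \<mu> A"
    using b by (auto simp: borel_om_def)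
  have mono: "\<And>A B. A \<subseteq> B \<Longrightarrow> \<mu> A \<le> \<mu> B" using om by (auto simp: is_outer_measure_def)
  have e: "\<mu> {} = 0" using om by (auto simp: is_outer_measure_def)
  have csa: "\<And>A :: nat \<Rightarrow> 'a set. \<mu> (\<Union>i. A i) \<le> (\<Sum>i. \<mu> (A i))"
    using om by (auto simp: is_outer_measure_def)
  have oom: "is_outer_measure \<nu>"
    unfolding is_outer_measure_def
  proof (intro conjI allI impI)
    show "\<nu> {} = 0" by (simp add: \<nu>_def e)
  next
    fix A B :: "'a set" assume "A \<subseteq> B"
    then show "\<nu> A \<le> \<nu> B" unfolding \<nu>_def
      by (intro mult_right_mono mono) auto
  next
    fix A :: "nat \<Rightarrow> 'a set"
    have "\<mu> ((\<Union>i. A i) \<inter> X) \<le> (\<Sum>i. \<mu> (A i \<inter> X))"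
      proof -
      have "(\<Union>i. A i) \<inter> X = (\<Union>i. A i \<inter> X)" by blast
      then show ?thesis using csa[of "\<lambda>i. A i \<inter> X"] by simp
    qed
    then show "\<nu> (\<Union>i. A i) \<le> (\<Sum>i. \<nu> (A i))" unfolding \<nu>_def
      by (simp add: mult_right_mono)
  qed
  have meas: "\<And>A. om_measurable \<mu> A \<Longrightarrow> om_measurable \<nu> A"
  proof -
    fix A assume "om_measurable \<mu> A"
    then have "\<And>E. \<mu> (E \<inter> X) = \<mu> (E \<inter> X \<inter> A) + \<mu> (E \<inter> X - A)"
      unfolding om_measurable_def by blast
    then show "om_measurable \<nu> A" unfolding om_measurable_def \<nu>_def
    proof (intro allI)
      fix E
      have "E \<inter> A \<inter> X = E \<inter> X \<inter> A" "(E - A) \<inter> X = E \<inter> X - A" by auto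
      moreover have "\<mu> (E \<inter> X) = \<mu> (E \<inter> X \<inter> A) + \<mu> (E \<inter> X - A)"
        using \<open>\<And>E. \<mu> (E \<inter> X) = \<mu> (E \<inter> X \<inter> A) + \<mu> (E \<inter> X - A)\<close> by blast
      ultimately show "\<mu> (E \<inter> X) * ?c = \<mu> (E \<inter> A \<inter> X) * ?c + \<mu> ((E - A) \<inter> X) * ?c"
        by (simp only: distrib_right)
    qed
  qed
  have one: "\<nu> UNIV = 1"
    using p f by (simp add: \<nu>_def ennreal_divide_self divide_ennreal_def[symmetric])
  show "borel_probability_om \<nu>"
    using oom meas bm one by (auto simp: borel_probability_om_def borel_om_def)
  fix A assume "\<mu> A = 0"
  then have "\<mu> (A \<inter> X) = 0" using mono[of "A \<inter> X" A] by simp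
  then show "\<nu> A = 0" by (simp add: \<nu>_def)
qed

lemma om_support_closed: "closed (om_support \<mu>)"
proof -
  have "- om_support \<mu> = \<Union>{U. open U \<and> \<mu> U = 0}"
    unfolding om_support_def by (auto simp: not_less)
  then show ?thesis unfolding closed_def by auto
qed

lemma support_sub:
  fixes \<mu> :: "'a::topological_space set \<Rightarrow> ennreal"
  assumes e: "\<mu> {} = 0" and K: "closed K"
  shows "om_support (\<lambda>A. \<mu> (A \<inter> K) * c) \<subseteq> K"
proof
  fix x assume x: "x \<in> om_support (\<lambda>A. \<mu> (A \<inter> K) * c)"
  show "x \<in> K"
  proof (rule ccontr)
    assume "x \<notin> K"
    moreover have "open (- K)" using K by auto
    ultimately have "0 < \<mu> (- K \<inter> K) * c" using x unfolding om_support_def by blast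
    then show False using e by simp
  qed
qed

lemma bprob_facts:
  fixes \<mu> :: "'a::topological_space set \<Rightarrow> ennreal"
  assumes "borel_probability_om \<mu>"
  shows "\<mu> {} = 0" "\<And>A B. A \<subseteq> B \<Longrightarrow> \<mu> A \<le> \<mu> B" "\<mu> UNIV = 1"
    "\<And>A. A \<in> sets borel \<Longrightarrow> om_measurable \<mu> A" "borel_om \<mu>"
  using assms by (auto simp: borel_probability_om_def borel_om_def is_outer_measure_def)

theorem theorem4p4:
  fixes B :: "'a::{polish_space, topological_group_add} set"
  assumes "universally_measurable B"
  shows "((\<exists>\<mu>. borel_probability_om \<mu> \<and> (\<forall>g h. \<mu> (two_sided_translate g B h) = 0))
           \<longleftrightarrow> (\<exists>\<mu>. borel_probability_om \<mu> \<and> compact (om_support \<mu>) \<and>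
                    (\<forall>g h. \<mu> (two_sided_translate g B h) = 0)))
       \<and> ((\<exists>\<mu>. borel_probability_om \<mu> \<and> (\<forall>g h. \<mu> (two_sided_translate g B h) = 0))
           \<longleftrightarrow> (\<exists>\<mu>. borel_om \<mu> \<and> (\<exists>X. om_measurable \<mu> X \<and> 0 < \<mu> X \<and> \<mu> X < \<infinity>) \<and>
                    (\<forall>g h. \<mu> (two_sided_translate g B h) = 0)))
       \<and> ((\<exists>\<mu>. borel_probability_om \<mu> \<and> (\<forall>g h. \<mu> (two_sided_translate g B h) = 0))
           \<longleftrightarrow> (\<exists>\<mu>. borel_om \<mu> \<and> (\<exists>C. compact C \<and> 0 < \<mu> C \<and> \<mu> C < \<infinity>) \<and>
                    (\<forall>g h. \<mu> (two_sided_translate g B h) = 0)))"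
  (is "(?P1 \<longleftrightarrow> ?P2) \<and> (?P1 \<longleftrightarrow> ?P3) \<and> (?P1 \<longleftrightarrow> ?P4)")
proof -
  let ?T = "\<lambda>g h. two_sided_translate g B h"
  have P3P1: "?P1" if "?P3"
  proof -
    from that obtain \<mu> X where b: "borel_om \<mu>" and X: "om_measurable \<mu> X" "0 < \<mu> X" "\<mu> X < \<infinity>"
      and z: "\<forall>g h. \<mu> (?T g h) = 0" by blast
    show ?thesis using restrict_prob[OF b X] z by blast
  qed
  have P1K: "\<exists>\<mu> K. borel_probability_om \<mu> \<and> (\<forall>g h. \<mu> (?T g h) = 0) \<and> compact K \<and> 0 < \<mu> K \<and> \<mu> K < \<infinity>
      \<and> om_measurable \<mu> K" if "?P1"
  proof -
    from that obtain \<mu> where p: "borel_probability_om \<mu>" and z: "\<forall>g h. \<mu> (?T g h) = 0" by blast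
    obtain K where K: "compact K" "0 < \<mu> K" using exists_compact_pos[OF p] by blast
    have "\<mu> K \<le> 1" using bprob_facts(2)[OF p, of K UNIV] bprob_facts(3)[OF p] by simp
    then have "\<mu> K < \<infinity>" by (simp add: le_less_trans)
    moreover have "om_measurable \<mu> K" using bprob_facts(4)[OF p] K(1) by (simp add: borel_compact)
    ultimately show ?thesis using p z K by blast
  qed
  have P1P2: "?P2" if "?P1"
  proof -
    from P1K[OF that] obtain \<mu> K where p: "borel_probability_om \<mu>" and z: "\<forall>g h. \<mu> (?T g h) = 0"
      and K: "compact K" "0 < \<mu> K" "\<mu> K < \<infinity>" "om_measurable \<mu> K" by blast
    define \<nu> where "\<nu> = (\<lambda>A. \<mu> (A \<inter> K) * inverse (\<mu> K))"
    have b: "borel_om \<mu>" using bprob_facts(5)[OF p] .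
    have "borel_probability_om \<nu>" "\<forall>g h. \<nu> (?T g h) = 0"
      using restrict_prob[OF b K(4,2,3)] z unfolding \<nu>_def by auto
    moreover have "compact (om_support \<nu>)"
    proof -
      have "om_support \<nu> \<subseteq> K" unfolding \<nu>_def
        by (rule support_sub[where \<mu>=\<mu>, OF bprob_facts(1)[OF p] compact_imp_closed[OF K(1)]])
      then have eq: "K \<inter> om_support \<nu> = om_support \<nu>" by blast
      have "compact (K \<inter> om_support \<nu>)" by (rule compact_Int_closed[OF K(1) om_support_closed])
      then show ?thesis unfolding eq .
    qed
    ultimately show ?thesis by blast
  qed
  have P1P3: "?P3" if "?P1"
    using P1K[OF that] bprob_facts(5) by blast
  have P1P4: "?P4" if "?P1"
    using P1K[OF that] bprob_facts(5) by blast
  have P4P3: "?P3" if "?P4"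
  proof -
    from that obtain \<mu> C where b: "borel_om \<mu>" and C: "compact C" "0 < \<mu> C" "\<mu> C < \<infinity>"
      and z: "\<forall>g h. \<mu> (?T g h) = 0" by blast
    have "om_measurable \<mu> C" using b C(1) by (simp add: borel_om_def borel_compact)
    then show ?thesis using b C z by blast
  qed
  have P2P1: "?P1" if "?P2"
  proof -
    from that obtain \<mu> where "borel_probability_om \<mu>" "\<forall>g h. \<mu> (?T g h) = 0" by blast
    then show ?thesis by blast
  qed
  show ?thesis
  proof (intro conjI iffI)
    show "?P2" if "?P1" using P1P2 that by blast
    show "?P1" if "?P2" using P2P1 that by blast
    show "?P3" if "?P1" using P1P3 that by blast
    show "?P1" if "?P3" using P3P1 that by blast
    show "?P4" if "?P1" using P1P4 that by blast
    show "?P1" if "?P4" using P3P1 P4P3 that by blast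
  qed
qed

end
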